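(* Let $r_0\in\,]0,1[$, let $A=\{z\in\mathbb{C}: r_0<|z|<1\}$, and let $\mu$ be a complex (Borel) measure on $\partial A=\mathbb{T}\cup r_0\mathbb{T}$, where $\mathbb{T}=\{|z|=1\}$. For $j\in\mathbb{Z}$ define $$\widehat{\mu}^0_j=\int_{r_0\mathbb{T}} z^{-j}\,d\mu(z),\qquad \widehat{\mu}^1_j=\int_{\mathbb{T}} z^{-j}\,d\mu(z).$$ If $\widehat{\mu}^0_j=-\widehat{\mu}^1_j$ for all $j\in\mathbb{Z}$, then every subset of $\partial A$ of arclength measure $0$ is a null set with respect to $\mu$.
   Context: A subset of $\partial A$ has arclength measure $0$ if its intersections with $\mathbb{T}$ and with $r_0\mathbb{T}$ both have arclength (one-dimensional Lebesgue) measure $0$; being a null set with respect to a complex measure $\mu$ means being a null set for its total variation $|\mu|$. *)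

theory Defs
  imports "HOL-Analysis.Analysis"
begin

text \<open>A complex Borel measure on a Borel set S of the complex plane is represented by
  its (Jordan-type) decomposition mu = M1 - M2 + i (M3 - M4) into four finite positive
  Borel measures on the complex plane, each concentrated on S.  Every complex Borel measure
  on S arises this way, and the notions below (values, integrals, total variation) depend
  only on the resulting complex set function, resp. are the standard ones for it.\<close>

definition cmeasure_on :: "complex set \<Rightarrow> complex measure list \<Rightarrow> bool" where
  "cmeasure_on S Ms \<longleftrightarrow> S \<in> sets borel \<and> length Ms = 4 \<and>
     (\<forall>M \<in> set Ms. sets M = sets borel \<and> finite_measure M \<and> emeasure M (- S) = 0)"

definition cval :: "complex measure list \<Rightarrow> complex set \<Rightarrow> complex" where
  "cval Ms E = complex_of_real (measure (Ms!0) E - measure (Ms!1) E)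
             + \<i> * complex_of_real (measure (Ms!2) E - measure (Ms!3) E)"

definition cintegral :: "complex measure list \<Rightarrow> complex set \<Rightarrow> (complex \<Rightarrow> complex) \<Rightarrow> complex" where
  "cintegral Ms B f = (LINT z:B|Ms!0. f z) - (LINT z:B|Ms!1. f z)
                    + \<i> * ((LINT z:B|Ms!2. f z) - (LINT z:B|Ms!3. f z))"

definition ctotal_variation :: "complex measure list \<Rightarrow> complex set \<Rightarrow> real" where
  "ctotal_variation Ms E = Sup {(\<Sum>P\<in>\<P>. cmod (cval Ms P)) | \<P>.
       finite \<P> \<and> disjoint \<P> \<and> \<Union>\<P> = E \<and> \<P> \<subseteq> sets borel}"

definition cnull :: "complex measure list \<Rightarrow> complex set \<Rightarrow> bool" where
  "cnull Ms E \<longleftrightarrow> (\<exists>B \<in> sets borel. E \<subseteq> B \<and> ctotal_variation Ms B = 0)"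

definition circ :: "real \<Rightarrow> complex set" where
  "circ r = {z. cmod z = r}"

text \<open>E \<inter> r T has arclength measure zero (arclength on r T is the image of r times
  Lebesgue measure under t \<mapsto> r e^{it}, t \<in> [0, 2 pi]).\<close>
definition arc_null :: "real \<Rightarrow> complex set \<Rightarrow> bool" where
  "arc_null r E \<longleftrightarrow> {t \<in> {0..2*pi}. complex_of_real r * cis t \<in> E} \<in> null_sets lebesgue"

end

theory Submission
  imports Defs "HOL-Complex_Analysis.Complex_Analysis"
begin

lemma cis_dist: "cmod (cis a - cis b) \<le> \<bar>a - b\<bar>"
proof -
  have "(cmod (cis a - cis b))^2 = (cos a - cos b)^2 + (sin a - sin b)^2"
    by (simp add: cmod_power2)
  also have "\<dots> = 2 - 2 * cos (a - b)"
    by (simp add: cos_diff power2_diff) (smt (verit) sin_cos_squared_add)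
  also have "\<dots> = 4 * (sin ((a - b)/2))^2"
  proof -
    have h: "2 * ((a-b)/2) = a - b" by simp
    show ?thesis using cos_double_sin[of "(a-b)/2"] unfolding h by simp
  qed
  also have "\<dots> \<le> (a - b)^2"
  proof -
    have "\<bar>sin ((a-b)/2)\<bar> \<le> \<bar>(a-b)/2\<bar>" by (rule abs_sin_x_le_abs_x)
    then have "(sin ((a-b)/2))^2 \<le> ((a-b)/2)^2"
      by (metis abs_le_square_iff)
    then show ?thesis by (simp add: power_divide)
  qed
  finally show ?thesis
    by (metis abs_le_square_iff abs_norm_cancel)
qed

lemma Re_frac:
  assumes "a \<noteq> z"
  shows "Re ((a + z) / (a - z)) = ((cmod a)^2 - (cmod z)^2) / (cmod (a - z))^2"
proof -
  have "Re (a+z) * Re (a-z) + Im (a+z) * Im (a-z) = (cmod a)^2 - (cmod z)^2"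
    unfolding cmod_power2 by (simp add: algebra_simps power2_eq_square)
  then show ?thesis by (simp add: Re_divide cmod_power2)
qed

lemma Arg_measurable: "Arg \<in> borel_measurable borel"
proof -
  let ?A = "- \<real>\<^sub>\<le>\<^sub>0 :: complex set"
  have A: "?A \<in> sets borel" by (simp add: borel_open open_Compl)
  have h: "(\<lambda>z. if z \<in> ?A then Arg z else pi) \<in> borel_measurable borel"
    by (rule borel_measurable_continuous_on_if[OF A continuous_on_Arg]) (rule continuous_on_const)
  have eq: "Arg = (\<lambda>z. if z = 0 then 0 else (if z \<in> ?A then Arg z else pi))"
  proof
    fix z :: complex
    show "Arg z = (if z = 0 then 0 else (if z \<in> ?A then Arg z else pi))"
    proof (cases "z = 0 \<or> z \<in> ?A")
      case False
      then have "z \<in> \<real>\<^sub>\<le>\<^sub>0" "z \<noteq> 0" by auto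
      then have "Re z < 0" "Im z = 0"
        by (auto simp: complex_nonpos_Reals_iff less_le complex_eq_iff)
      then show ?thesis using False Arg_eq_pi by auto
    qed (auto simp: Arg_zero)
  qed
  show ?thesis
    by (subst eq) (intro measurable_If h, auto)
qed

lemma Arg2pi_alt: "Arg2pi z = (if z = 0 then 0 else if 0 \<le> Arg z then Arg z else Arg z + 2*pi)"
proof (cases "z = 0")
  case False
  have e: "z = of_real(norm z) * exp(\<i> * Arg z)" using Arg_eq[OF False] .
  have n: "0 < norm z" using False by simp
  show ?thesis
  proof (cases "0 \<le> Arg z")
    case True
    have "Arg z < 2*pi" using Arg_le_pi[of z] pi_gt_zero by linarith
    then show ?thesis using False Arg2pi_unique[OF e[symmetric] n True] True
      by auto
  next
    case F: False
    have "exp(\<i> * complex_of_real (Arg z + 2*pi)) = exp(\<i> * Arg z)"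
      by (simp add: algebra_simps exp_add)
    then have e2: "of_real(norm z) * exp(\<i> * complex_of_real (Arg z + 2*pi)) = z"
      using e by simp
    show ?thesis using False F Arg2pi_unique[OF e2 n] mpi_less_Arg[of z] by auto
  qed
qed simp

lemma Arg2pi_measurable: "Arg2pi \<in> borel_measurable borel"
  unfolding Arg2pi_alt[abs_def]
  using Arg_measurable by measurable

lemma Arg2pi_rcis:
  assumes "0 < r" "0 \<le> t" "t < 2*pi"
  shows "Arg2pi (complex_of_real r * cis t) = t"
  using Arg2pi_unique[of r t] assms by (simp add: cis_conv_exp)

lemma eq_rcis_Arg2pi:
  assumes "z \<noteq> 0"
  shows "z = complex_of_real (cmod z) * cis (Arg2pi z)"
  using Arg2pi_eq[of z] by (simp add: cis_conv_exp)

definition ci :: "complex measure list \<Rightarrow> (complex \<Rightarrow> complex) \<Rightarrow> complex" where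
  "ci Ms f = (\<integral>z. f z \<partial>(Ms!0)) - (\<integral>z. f z \<partial>(Ms!1)) + \<i> * ((\<integral>z. f z \<partial>(Ms!2)) - (\<integral>z. f z \<partial>(Ms!3)))"

context
  fixes S :: "complex set" and Ms :: "complex measure list"
  assumes cm: "cmeasure_on S Ms"
begin

lemma cm_all: "i < 4 \<Longrightarrow> sets (Ms!i) = sets borel \<and> finite_measure (Ms!i) \<and> emeasure (Ms!i) (- S) = 0"
proof -
  assume i: "i < 4"
  have "length Ms = 4" "\<forall>M\<in>set Ms. sets M = sets borel \<and> finite_measure M \<and> emeasure M (- S) = 0"
    using cm unfolding cmeasure_on_def by auto
  moreover have "Ms!i \<in> set Ms" using i \<open>length Ms = 4\<close> by (intro nth_mem) simp
  ultimately show ?thesis by blast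
qed

lemma cm_sets: "i < 4 \<Longrightarrow> sets (Ms!i) = sets borel"
  using cm_all by blast

lemma cm_fin: "i < 4 \<Longrightarrow> finite_measure (Ms!i)"
  using cm_all by blast

lemma cm_null: "i < 4 \<Longrightarrow> emeasure (Ms!i) (- S) = 0"
  using cm_all by blast

lemma cm_S: "S \<in> sets borel"
  using cm unfolding cmeasure_on_def by auto

lemma cm_space: "i < 4 \<Longrightarrow> space (Ms!i) = UNIV"
proof -
  assume "i < 4"
  then have "space (Ms!i) = space borel" by (rule sets_eq_imp_space_eq[OF cm_sets])
  then show ?thesis by simp
qed

lemma cm_meas: "i < 4 \<Longrightarrow> f \<in> borel_measurable borel \<Longrightarrow> f \<in> borel_measurable (Ms!i)"
proof -
  assume "i < 4" "f \<in> borel_measurable borel"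
  then show ?thesis using measurable_cong_sets[OF cm_sets[OF \<open>i < 4\<close>] refl, of borel] by metis
qed

lemma cm_AE: "i < 4 \<Longrightarrow> AE z in Ms!i. z \<in> S"
proof -
  assume i: "i < 4"
  have "-S \<in> sets (Ms!i)" using cm_sets[OF i] cm_S by auto
  then show ?thesis
    using AE_iff_measurable[of "-S" "Ms!i" "\<lambda>z. z \<in> S"] cm_null[OF i] cm_space[OF i]
    by auto
qed

lemma cm_intg:
  assumes i: "i < 4" and f: "f \<in> borel_measurable borel" and b: "\<And>z. z \<in> S \<Longrightarrow> norm (f z) \<le> B"
  shows "integrable (Ms!i) (f :: complex \<Rightarrow> complex)"
proof -
  interpret finite_measure "Ms!i" using cm_fin[OF i] .
  show ?thesis
    by (rule integrable_const_bound[where B=B]) (use cm_AE[OF i] b in \<open>auto elim!: AE_mp intro: cm_meas[OF i f]\<close>)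
qed

lemma cm_dct:
  assumes i: "i < 4" and f: "f \<in> borel_measurable borel" and s: "\<And>n. s n \<in> borel_measurable borel"
    and lim: "\<And>z. z \<in> S \<Longrightarrow> (\<lambda>n. s n z) \<longlonglongrightarrow> f z"
    and b: "\<And>n z. z \<in> S \<Longrightarrow> norm (s n z) \<le> B"
  shows "(\<lambda>n. \<integral>z. (s n z :: complex) \<partial>(Ms!i)) \<longlonglongrightarrow> (\<integral>z. f z \<partial>(Ms!i))"
proof -
  interpret finite_measure "Ms!i" using cm_fin[OF i] .
  show ?thesis
  proof (rule integral_dominated_convergence[where w="\<lambda>_. B"])
    show "f \<in> borel_measurable (Ms!i)" using cm_meas[OF i f] .
    show "s n \<in> borel_measurable (Ms!i)" for n using cm_meas[OF i s] .
    show "integrable (Ms!i) (\<lambda>_. B)" by simp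
    show "AE x in Ms!i. (\<lambda>n. s n x) \<longlonglongrightarrow> f x" using cm_AE[OF i] lim by (auto elim!: AE_mp)
    show "AE x in Ms!i. norm (s n x) \<le> B" for n using cm_AE[OF i] b by (auto elim!: AE_mp)
  qed
qed

lemma ci_dct:
  assumes f: "f \<in> borel_measurable borel" and s: "\<And>n. s n \<in> borel_measurable borel"
    and lim: "\<And>z. z \<in> S \<Longrightarrow> (\<lambda>n. s n z) \<longlonglongrightarrow> f z"
    and b: "\<And>n z. z \<in> S \<Longrightarrow> norm (s n z) \<le> B"
  shows "(\<lambda>n. ci Ms (s n)) \<longlonglongrightarrow> ci Ms f"
  unfolding ci_def
  by (intro tendsto_intros cm_dct[OF _ f s lim b]) auto

lemma ci_eq:
  assumes "\<And>i. i < 4 \<Longrightarrow> (\<integral>z. f z \<partial>(Ms!i)) = G i"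
  shows "ci Ms f = G 0 - G 1 + \<i> * (G 2 - G 3)"
proof -
  have "(\<integral>z. f z \<partial>(Ms!0)) = G 0" "(\<integral>z. f z \<partial>(Ms!1)) = G 1"
    "(\<integral>z. f z \<partial>(Ms!2)) = G 2" "(\<integral>z. f z \<partial>(Ms!3)) = G 3"
    by (rule assms, simp)+
  then show ?thesis unfolding ci_def by simp
qed

lemma ci_sum:
  assumes "finite A" and f: "\<And>k. k \<in> A \<Longrightarrow> f k \<in> borel_measurable borel"
    and b: "\<And>k z. k \<in> A \<Longrightarrow> z \<in> S \<Longrightarrow> norm (f k z) \<le> B k"
  shows "ci Ms (\<lambda>z. \<Sum>k\<in>A. c k * f k z) = (\<Sum>k\<in>A. c k * ci Ms (f k))"
proof -
  have I: "(\<integral>z. (\<Sum>k\<in>A. c k * f k z) \<partial>(Ms!i)) = (\<Sum>k\<in>A. c k * (\<integral>z. f k z \<partial>(Ms!i)))" if i: "i < 4" for i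
  proof -
    have "(\<integral>z. (\<Sum>k\<in>A. c k * f k z) \<partial>(Ms!i)) = (\<Sum>k\<in>A. (\<integral>z. c k * f k z \<partial>(Ms!i)))"
    proof (rule Bochner_Integration.integral_sum)
      fix k assume k: "k \<in> A"
      have "integrable (Ms!i) (f k)"
        by (rule cm_intg[OF i f[OF k]], rule b[OF k], assumption)
      then show "integrable (Ms!i) (\<lambda>z. c k * f k z)" by (rule integrable_mult_right)
    qed
    then show ?thesis by simp
  qed
  show ?thesis
    by (subst ci_eq[OF I], assumption)
       (simp add: ci_def sum_distrib_left sum_subtractf sum.distrib right_diff_distrib distrib_left mult.left_commute)
qed

lemma ci_diff:
  assumes f: "f \<in> borel_measurable borel" and b: "\<And>z. z \<in> S \<Longrightarrow> norm (f z) \<le> B"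
    and g: "g \<in> borel_measurable borel" and b2: "\<And>z. z \<in> S \<Longrightarrow> norm (g z) \<le> B2"
  shows "ci Ms (\<lambda>z. f z - g z) = ci Ms f - ci Ms g"
proof -
  have I: "(\<integral>z. f z - g z \<partial>(Ms!i)) = (\<integral>z. f z \<partial>(Ms!i)) - (\<integral>z. g z \<partial>(Ms!i))" if i: "i < 4" for i
    using cm_intg[OF i f b] cm_intg[OF i g b2] by (rule Bochner_Integration.integral_diff)
  have alg: "(a0-b0) - (a1-b1) + \<i>*((a2-b2)-(a3-b3)) = (a0 - a1 + \<i>*(a2-a3)) - (b0 - b1 + \<i>*(b2 - b3))"
    for a0 a1 a2 a3 b0 b1 b2 b3 :: complex by (simp add: right_diff_distrib)
  show ?thesis by (subst ci_eq[OF I], assumption) (simp only: alg ci_def)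
qed

end

context
  fixes S :: "complex set" and Ms :: "complex measure list"
  assumes cm: "cmeasure_on S Ms"
begin

lemma ci_holo:
  assumes R: "1 < R" and g: "g holomorphic_on ball 0 R"
    and phi: "\<phi> \<in> borel_measurable borel" and phib: "\<And>z. z \<in> S \<Longrightarrow> norm (\<phi> z) \<le> 1"
    and mom: "\<And>n. ci Ms (\<lambda>z. \<phi> z ^ n) = 0"
    and gm: "(\<lambda>z. g (\<phi> z)) \<in> borel_measurable borel"
  shows "ci Ms (\<lambda>z. g (\<phi> z)) = 0"
proof -
  define a where "a n = (deriv ^^ n) g 0 / fact n" for n
  have sums: "(\<lambda>n. a n * w^n) sums g w" if "w \<in> ball 0 R" for w
    using holomorphic_power_series[OF g that] by (simp add: a_def)
  define r where "r = (1 + R) / 2"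
  have r: "1 < r" "r < R" using R by (auto simp: r_def)
  have "summable (\<lambda>n. a n * (complex_of_real r)^n)"
    using sums[of "complex_of_real r"] r by (auto simp: sums_iff)
  then have sa: "summable (\<lambda>n. norm (a n * 1^n))"
    by (rule powser_insidea) (use r in auto)
  then have sa': "summable (\<lambda>n. norm (a n))" by simp
  define A where "A = (\<Sum>n. norm (a n))"
  define s where "s N z = (\<Sum>n<N. a n * \<phi> z ^ n)" for N z
  have sm: "s N \<in> borel_measurable borel" for N
    unfolding s_def[abs_def] using phi by measurable
  have lim: "(\<lambda>N. s N z) \<longlonglongrightarrow> g (\<phi> z)" if z: "z \<in> S" for z
  proof -
    have "\<phi> z \<in> ball 0 R" using phib[OF z] R by auto
    then show ?thesis using sums[of "\<phi> z"] unfolding s_def sums_def by simp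
  qed
  have bd: "norm (s N z) \<le> A" if z: "z \<in> S" for N z
  proof -
    have "norm (s N z) \<le> (\<Sum>n<N. norm (a n * \<phi> z ^ n))"
      unfolding s_def by (rule norm_sum)
    also have "\<dots> \<le> (\<Sum>n<N. norm (a n))"
    proof (rule sum_mono)
      fix n
      have "norm (\<phi> z ^ n) \<le> 1" using phib[OF z] by (simp add: norm_power power_le_one)
      then show "norm (a n * \<phi> z ^ n) \<le> norm (a n)"
        by (simp add: norm_mult mult_left_le)
    qed
    also have "\<dots> \<le> A" unfolding A_def
      by (rule sum_le_suminf[OF sa']) auto
    finally show ?thesis .
  qed
  have conv: "(\<lambda>N. ci Ms (s N)) \<longlonglongrightarrow> ci Ms (\<lambda>z. g (\<phi> z))"
    by (rule ci_dct[OF cm gm sm lim bd])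
  have zero: "ci Ms (s N) = 0" for N
  proof -
    have "ci Ms (s N) = ci Ms (\<lambda>z. \<Sum>n\<in>{..<N}. a n * \<phi> z ^ n)"
      unfolding s_def ..
    also have "\<dots> = (\<Sum>n\<in>{..<N}. a n * ci Ms (\<lambda>z. \<phi> z ^ n))"
    proof (rule ci_sum[OF cm, where B = "\<lambda>_. 1"])
      show "(\<lambda>z. \<phi> z ^ n) \<in> borel_measurable borel" for n using phi by measurable
      show "norm (\<phi> z ^ n) \<le> 1" if "z \<in> S" for z n
        using phib[OF that] by (simp add: norm_power power_le_one)
    qed simp
    also have "\<dots> = 0" using mom by simp
    finally show ?thesis .
  qed
  show ?thesis using conv unfolding zero by (simp add: LIMSEQ_const_iff)
qed

end

definition gl :: "nat \<Rightarrow> real" where "gl n = 2 * pi / real (Suc n)"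

definition Sg :: "real set \<Rightarrow> nat \<Rightarrow> nat set" where
  "Sg N n = {k \<in> {0..Suc n}. \<exists>t\<in>N. real k * gl n \<le> t \<and> t \<le> (real k + 1) * gl n}"

definition Lg :: "real set \<Rightarrow> nat \<Rightarrow> real" where
  "Lg N n = gl n * real (card (Sg N n))"

lemma gl_pos: "0 < gl n" by (simp add: gl_def)

lemma gl_le: "gl n \<le> 2 * pi" 
  unfolding gl_def by (simp add: field_simps)

lemma gl_lim: "gl \<longlonglongrightarrow> 0"
proof -
  have "(\<lambda>n. 2 * pi * inverse (real (Suc n))) \<longlonglongrightarrow> 2 * pi * 0"
    by (intro tendsto_intros LIMSEQ_inverse_real_of_nat)
  then show ?thesis unfolding gl_def by (simp add: divide_inverse)
qed

lemma gl_mono: "m \<le> n \<Longrightarrow> gl n \<le> gl m"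
  unfolding gl_def by (simp add: frac_le)

lemma Sg_finite: "finite (Sg N n)"
  unfolding Sg_def by auto

lemma grid_lim:
  assumes Nc: "compact N" and Nsub: "N \<subseteq> {0..2*pi}" and Nnull: "N \<in> null_sets lborel"
  shows "Lg N \<longlonglongrightarrow> 0"
proof (cases "N = {}")
  case True
  have "Lg N = (\<lambda>n. 0)" by (rule ext) (simp add: Lg_def Sg_def True)
  then show ?thesis by simp
next
  case Nne: False
  have Ncl: "closed N" using Nc compact_imp_closed by auto
  define D where "D d = {t. infdist t N \<le> d} \<inter> {-1..4*pi+1}" for d
  have Dsets: "D d \<in> sets borel" for d
  proof -
    have "closed {t. infdist t N \<le> d}"
      by (intro closed_Collect_le continuous_intros)
    then show ?thesis unfolding D_def by auto
  qed
  have Dfin: "emeasure lborel (D d) \<noteq> \<infinity>" for d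
  proof -
    have "emeasure lborel (D d) \<le> emeasure lborel {-1..4*pi+1::real}"
      by (rule emeasure_mono) (auto simp: D_def)
    then show ?thesis by (auto simp: top_unique)
  qed
  define C where "C n k = {real k * gl n ..< (real k + 1) * gl n}" for n k
  have disj: "disjoint_family_on (C n) (Sg N n)" for n
    unfolding disjoint_family_on_def
  proof (intro ballI impI)
    fix k k' :: nat assume "k \<in> Sg N n" "k' \<in> Sg N n" "k \<noteq> k'"
    then have "k < k' \<or> k' < k" by auto
    then show "C n k \<inter> C n k' = {}"
    proof
      assume "k < k'"
      then have "(real k + 1) * gl n \<le> real k' * gl n"
        using gl_pos[of n] by (intro mult_right_mono) auto
      then show ?thesis unfolding C_def by auto
    next
      assume "k' < k"
      then have "(real k' + 1) * gl n \<le> real k * gl n"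
        using gl_pos[of n] by (intro mult_right_mono) auto
      then show ?thesis unfolding C_def by auto
    qed
  qed
  have meas: "measure lborel (\<Union>k\<in>Sg N n. C n k) = Lg N n" for n
  proof -
    have "measure lborel (\<Union>k\<in>Sg N n. C n k) = (\<Sum>k\<in>Sg N n. measure lborel (C n k))"
    proof (rule measure_finite_Union[OF Sg_finite _ disj])
      show "C n ` Sg N n \<subseteq> sets lborel" by (auto simp: C_def)
      fix k
      have "real k * gl n \<le> (real k + 1) * gl n" using gl_pos[of n] by (intro mult_right_mono) auto
      then show "emeasure lborel (C n k) \<noteq> \<infinity>" by (simp add: C_def)
    qed
    also have "\<dots> = (\<Sum>k\<in>Sg N n. gl n)"
      using gl_pos[of n] by (intro sum.cong) (auto simp: C_def algebra_simps)
    finally show ?thesis by (simp add: Lg_def)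
  qed
  have sub: "(\<Union>k\<in>Sg N n. C n k) \<subseteq> D (gl n)" for n
  proof
    fix s assume "s \<in> (\<Union>k\<in>Sg N n. C n k)"
    then obtain k t where k: "k \<le> Suc n" and t: "t \<in> N" "real k * gl n \<le> t" "t \<le> (real k + 1) * gl n"
      and s: "real k * gl n \<le> s" "s < (real k + 1) * gl n"
      unfolding Sg_def C_def by auto
    have "infdist s N \<le> gl n"
      by (rule infdist_le2[OF t(1)]) (use t s in \<open>auto simp: dist_real_def algebra_simps\<close>)
    moreover have "0 \<le> s" using s gl_pos[of n] by (smt (verit) of_nat_0_le_iff zero_le_mult_iff)
    moreover have "s \<le> 4 * pi + 1"
    proof -
      have "(real k + 1) * gl n \<le> (real (Suc n) + 1) * gl n"
        using k gl_pos[of n] by (intro mult_right_mono) auto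
      also have "\<dots> = 2 * pi + 2 * pi / real (Suc n)" unfolding gl_def
        by (simp add: field_simps)
      also have "\<dots> \<le> 4 * pi" by (simp add: field_simps)
      finally show ?thesis using s by linarith
    qed
    ultimately show "s \<in> D (gl n)" unfolding D_def by auto
  qed
  have le: "Lg N n \<le> measure lborel (D (gl n))" for n
  proof -
    have "measure lborel (\<Union>k\<in>Sg N n. C n k) \<le> measure lborel (D (gl n))"
      by (rule measure_mono_fmeasurable[OF sub]) (use Dsets Dfin in \<open>auto simp: C_def fmeasurable_def less_top[symmetric]\<close>)
    then show ?thesis using meas by simp
  qed
  have ge: "0 \<le> Lg N n" for n using gl_pos[of n] by (simp add: Lg_def)
  have dec: "decseq (\<lambda>n. D (gl n))"
    unfolding decseq_def D_def using gl_mono by (auto intro: order_trans)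
  have inter: "(\<Inter>n. D (gl n)) = N"
  proof
    show "N \<subseteq> (\<Inter>n. D (gl n))"
    proof
      fix t assume t: "t \<in> N"
      then have "infdist t N = 0" by simp
      moreover have "0 \<le> t" "t \<le> 2 * pi" using Nsub t by auto
      ultimately show "t \<in> (\<Inter>n. D (gl n))" unfolding D_def using gl_pos by (auto intro: less_imp_le)
    qed
    show "(\<Inter>n. D (gl n)) \<subseteq> N"
    proof
      fix t assume "t \<in> (\<Inter>n. D (gl n))"
      then have h: "infdist t N \<le> gl n" for n unfolding D_def by auto
      have "infdist t N \<le> 0"
        by (rule tendsto_lowerbound[OF gl_lim]) (use h in auto)
      then have "infdist t N = 0" using infdist_nonneg[of t N] by linarith
      then show "t \<in> N" using in_closed_iff_infdist_zero[OF Ncl Nne] by simp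
    qed
  qed
  have "(\<lambda>n. measure lborel (D (gl n))) \<longlonglongrightarrow> measure lborel (\<Inter>n. D (gl n))"
    by (rule Lim_measure_decseq) (use Dsets dec Dfin in auto)
  have lim0: "(\<lambda>n. measure lborel (D (gl n))) \<longlonglongrightarrow> 0"
  proof -
    have "measure lborel N = 0" using Nnull by (simp add: Sigma_Algebra.measure_def null_setsD1)
    then show ?thesis using \<open>(\<lambda>n. measure lborel (D (gl n))) \<longlonglongrightarrow> measure lborel (\<Inter>n. D (gl n))\<close> inter by simp
  qed
  show ?thesis
    by (rule real_tendsto_sandwich[where f="\<lambda>_. 0" and h="\<lambda>n. measure lborel (D (gl n))"])
       (use ge le lim0 in auto)
qed

lemma Re_ofreal_mult: "Re (complex_of_real c * w) = c * Re w" by simp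

lemma term_nonneg:
  assumes "cmod z < cmod \<zeta>" "0 \<le> c"
  shows "0 \<le> Re (complex_of_real c * ((\<zeta> + z) / (\<zeta> - z)))"
proof -
  have ne: "\<zeta> \<noteq> z" using assms by auto
  have "0 \<le> ((cmod \<zeta>)^2 - (cmod z)^2) / (cmod (\<zeta> - z))^2"
    using assms by (intro divide_nonneg_nonneg) (auto intro!: power_mono)
  then have "0 \<le> Re ((\<zeta> + z) / (\<zeta> - z))" using Re_frac[OF ne] by simp
  then show ?thesis unfolding Re_ofreal_mult using assms by (intro mult_nonneg_nonneg)
qed

lemma term_big:
  assumes l: "0 < l" and z: "cmod z = 1" and \<zeta>: "cmod \<zeta> = 1 + l" and d: "cmod (\<zeta> - z) \<le> 2*l" and M: "0 \<le> M"
  shows "M \<le> Re (complex_of_real (2*M*l) * ((\<zeta> + z) / (\<zeta> - z)))"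
proof -
  have ne: "\<zeta> \<noteq> z" using z \<zeta> l by auto
  have q: "0 < (cmod (\<zeta> - z))^2" using ne by simp
  have q2: "(cmod (\<zeta> - z))^2 \<le> (2*l)^2" using d by (intro power_mono) auto
  have "(2*l) / (2*l)^2 \<le> ((1+l)^2 - 1) / (cmod (\<zeta> - z))^2"
    by (rule frac_le) (use l q q2 in \<open>auto simp: power2_eq_square algebra_simps\<close>)
  then have "2*M*l * ((2*l) / (2*l)^2) \<le> 2*M*l * (((1+l)^2 - 1) / (cmod (\<zeta> - z))^2)"
    using M l by (intro mult_left_mono) auto
  moreover have "2*M*l * ((2*l) / (2*l)^2) = M" using l by (simp add: power2_eq_square field_simps)
  ultimately have c: "M \<le> 2*M*l * (((1+l)^2 - 1) / (cmod (\<zeta> - z))^2)" by simp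
  have e1: "Re ((\<zeta> + z) / (\<zeta> - z)) = ((1+l)^2 - 1) / (cmod (\<zeta> - z))^2"
    using Re_frac[OF ne] z \<zeta> by simp
  show ?thesis unfolding Re_ofreal_mult e1 using c .
qed

lemma term_small:
  assumes z: "cmod z \<le> 1" and \<zeta>: "cmod \<zeta> = 1 + l" and l: "0 < l" "l \<le> 1"
    and e: "0 < e" "e \<le> cmod (\<zeta> - z)" and M: "0 \<le> M"
  shows "cmod (complex_of_real (2*M*l) * ((\<zeta> + z) / (\<zeta> - z))) \<le> 2*M*l*3/e"
proof -
  have "cmod (\<zeta> + z) \<le> 3" using norm_triangle_ineq[of \<zeta> z] z \<zeta> l by linarith
  then have "cmod ((\<zeta> + z) / (\<zeta> - z)) \<le> 3 / e"
    unfolding norm_divide using e by (intro frac_le) auto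
  then have "\<bar>2*M*l\<bar> * cmod ((\<zeta> + z) / (\<zeta> - z)) \<le> \<bar>2*M*l\<bar> * (3/e)"
    by (intro mult_left_mono) auto
  also have "\<dots> = 2*M*l*3/e" using M l by simp
  finally show ?thesis unfolding norm_mult norm_of_real .
qed

definition zeta :: "nat \<Rightarrow> nat \<Rightarrow> complex" where
  "zeta n k = complex_of_real (1 + gl n) * cis (real k * gl n)"

definition FF :: "real set \<Rightarrow> nat \<Rightarrow> real \<Rightarrow> complex \<Rightarrow> complex" where
  "FF N n M z = (\<Sum>k\<in>Sg N n. complex_of_real (2*M*gl n) * ((zeta n k + z) / (zeta n k - z)))"

definition GG :: "real set \<Rightarrow> nat \<Rightarrow> real \<Rightarrow> complex \<Rightarrow> complex" where
  "GG N n M z = 1 / (1 + FF N n M z)"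

lemma norm_zeta: "cmod (zeta n k) = 1 + gl n"
  unfolding zeta_def norm_mult norm_of_real norm_cis using gl_pos[of n] by simp

lemma zeta_dist: "cmod (zeta n k - cis (real k * gl n)) = gl n"
proof -
  have "zeta n k - cis (real k * gl n) = complex_of_real (gl n) * cis (real k * gl n)"
    by (simp add: zeta_def algebra_simps)
  then show ?thesis using gl_pos[of n] by (simp add: norm_mult)
qed

lemma FF_re_nonneg:
  assumes "cmod z < 1 + gl n" "0 \<le> M"
  shows "0 \<le> Re (FF N n M z)"
  unfolding FF_def Re_sum
  by (intro sum_nonneg term_nonneg) (use assms gl_pos[of n] norm_zeta in auto)

lemma GG_holo: "0 \<le> M \<Longrightarrow> GG N n M holomorphic_on ball 0 (1 + gl n)"
proof -
  assume M: "0 \<le> M"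
  have ne: "zeta n k - z \<noteq> 0" if "z \<in> ball 0 (1 + gl n)" for z k
    using that norm_zeta[of n k] by auto
  have ne2: "1 + FF N n M z \<noteq> 0" if "z \<in> ball 0 (1 + gl n)" for z
  proof -
    have "0 \<le> Re (FF N n M z)" using FF_re_nonneg[of z n M N] that M by auto
    then have "Re (1 + FF N n M z) \<noteq> 0" by simp
    then show ?thesis by (metis zero_complex.sel(1))
  qed
  show ?thesis unfolding GG_def[abs_def] FF_def
    by (intro holomorphic_intros) (use ne ne2 in \<open>auto simp: FF_def\<close>)
qed

lemma GG_meas: "GG N n M \<in> borel_measurable borel"
  unfolding GG_def[abs_def] FF_def by measurable

lemma GG_le1:
  assumes "cmod z \<le> 1" "0 \<le> M"
  shows "cmod (GG N n M z) \<le> 1"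
proof -
  have "0 \<le> Re (FF N n M z)" using FF_re_nonneg[of z n M N] assms gl_pos[of n] by auto
  then have "1 \<le> cmod (1 + FF N n M z)" using complex_Re_le_cmod[of "1 + FF N n M z"] by simp
  then show ?thesis unfolding GG_def by (simp add: norm_divide divide_le_eq_1)
qed

definition NK :: "complex set \<Rightarrow> real set" where "NK K = {t \<in> {0..2*pi}. cis t \<in> K}"

context
  fixes K :: "complex set"
  assumes Kc: "compact K" and K1: "K \<subseteq> circ 1"
begin


lemma K_grid:
  assumes z: "z \<in> K"
  shows "\<exists>k\<in>Sg (NK K) n. cmod (z - cis (real k * gl n)) \<le> gl n"
proof -
  have n1: "cmod z = 1" using z K1 by (auto simp: circ_def)
  then have "z \<noteq> 0" by auto
  define t where "t = Arg2pi z"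
  have zt: "z = cis t" using eq_rcis_Arg2pi[OF \<open>z \<noteq> 0\<close>] n1 by (simp add: t_def)
  have t: "0 \<le> t" "t < 2*pi" using Arg2pi_ge_0 Arg2pi_lt_2pi by (auto simp: t_def)
  have tN: "t \<in> (NK K)" using t zt z by (auto simp: NK_def)
  have g: "0 < gl n" by (rule gl_pos)
  define k where "k = nat (floor (t / gl n))"
  have rk: "real k = of_int (floor (t / gl n))" using t g by (simp add: k_def)
  have k1: "real k * gl n \<le> t"
    using rk g by (metis floor_divide_lower)
  have k2: "t < (real k + 1) * gl n"
    using rk g by (metis floor_divide_upper)
  have "real k * gl n < real (Suc n) * gl n"
    using k1 t by (simp add: gl_def)
  then have "k < Suc n" using g by (simp add: mult_less_cancel_right)
  then have kS: "k \<in> Sg (NK K) n" using tN k1 k2 unfolding Sg_def by auto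
  have "cmod (z - cis (real k * gl n)) \<le> \<bar>t - real k * gl n\<bar>"
    unfolding zt by (rule cis_dist)
  also have "\<dots> \<le> gl n" using k1 k2 by (simp add: algebra_simps)
  finally show ?thesis using kS by blast
qed

lemma grid_K:
  assumes k: "k \<in> Sg (NK K) n"
  shows "\<exists>w\<in>K. cmod (w - cis (real k * gl n)) \<le> gl n"
proof -
  obtain t where t: "t \<in> (NK K)" "real k * gl n \<le> t" "t \<le> (real k + 1) * gl n"
    using k unfolding Sg_def by auto
  have "cmod (cis t - cis (real k * gl n)) \<le> \<bar>t - real k * gl n\<bar>" by (rule cis_dist)
  also have "\<dots> \<le> gl n" using t by (simp add: algebra_simps)
  finally show ?thesis using t(1) unfolding NK_def by auto
qed

lemma GG_onK:
  assumes z: "z \<in> K" and M: "0 \<le> M"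
  shows "cmod (GG (NK K) n M z) \<le> 1 / (1 + M)"
proof -
  obtain k0 where k0: "k0 \<in> Sg (NK K) n" "cmod (z - cis (real k0 * gl n)) \<le> gl n"
    using K_grid[OF z] by blast
  have n1: "cmod z = 1" using z K1 by (auto simp: circ_def)
  let ?t = "\<lambda>k. Re (complex_of_real (2*M*gl n) * ((zeta n k + z) / (zeta n k - z)))"
  have "cmod (zeta n k0 - z) = cmod ((zeta n k0 - cis (real k0 * gl n)) - (z - cis (real k0 * gl n)))"
    by simp
  also have "\<dots> \<le> cmod (zeta n k0 - cis (real k0 * gl n)) + cmod (z - cis (real k0 * gl n))"
    by (rule norm_triangle_ineq4)
  also have "\<dots> \<le> 2 * gl n" using zeta_dist k0 by simp
  finally have "M \<le> ?t k0"
    by (intro term_big[OF gl_pos n1 norm_zeta _ M])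
  also have "?t k0 \<le> (\<Sum>k\<in>Sg (NK K) n. ?t k)"
    by (rule member_le_sum[OF k0(1) _ Sg_finite]) (intro term_nonneg, use n1 gl_pos[of n] norm_zeta M in auto)
  also have "\<dots> = Re (FF (NK K) n M z)" unfolding FF_def Re_sum ..
  finally have "M \<le> Re (FF (NK K) n M z)" .
  then have "1 + M \<le> cmod (1 + FF (NK K) n M z)" using complex_Re_le_cmod[of "1 + FF (NK K) n M z"] by simp
  then have "1 / cmod (1 + FF (NK K) n M z) \<le> 1 / (1 + M)"
    using M \<open>1 + M \<le> cmod (1 + FF (NK K) n M z)\<close> by (intro divide_left_mono mult_pos_pos) linarith+
  then show ?thesis unfolding GG_def norm_divide by simp
qed

lemma GG_offK:
  assumes z: "cmod z \<le> 1" and Kne: "K \<noteq> {}" and l1: "gl n \<le> 1" and d: "2 * gl n < infdist z K"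
    and M: "0 \<le> M"
  shows "cmod (1 - GG (NK K) n M z) \<le> 6 * M * Lg (NK K) n / (infdist z K - 2 * gl n)"
proof -
  let ?d = "infdist z K"
  let ?e = "?d - 2 * gl n"
  have e: "0 < ?e" using d by simp
  have "0 \<le> Re (FF (NK K) n M z)" using FF_re_nonneg[of z n M "NK K"] z M gl_pos[of n] by auto
  then have one: "1 \<le> cmod (1 + FF (NK K) n M z)" using complex_Re_le_cmod[of "1 + FF (NK K) n M z"] by simp
  have nz: "1 + FF (NK K) n M z \<noteq> 0" using one by auto
  have "1 - GG (NK K) n M z = FF (NK K) n M z / (1 + FF (NK K) n M z)"
    using nz unfolding GG_def by (simp add: field_simps)
  moreover have "cmod (FF (NK K) n M z) / cmod (1 + FF (NK K) n M z) \<le> cmod (FF (NK K) n M z) / 1"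
    using one by (intro divide_left_mono) auto
  ultimately have "cmod (1 - GG (NK K) n M z) \<le> cmod (FF (NK K) n M z)"
    by (simp add: norm_divide)
  also have "\<dots> \<le> (\<Sum>k\<in>Sg (NK K) n. cmod (complex_of_real (2*M*gl n) * ((zeta n k + z) / (zeta n k - z))))"
    unfolding FF_def by (rule norm_sum)
  also have "\<dots> \<le> (\<Sum>k\<in>Sg (NK K) n. 2*M*gl n*3/?e)"
  proof (rule sum_mono)
    fix k assume k: "k \<in> Sg (NK K) n"
    obtain w where w: "w \<in> K" "cmod (w - cis (real k * gl n)) \<le> gl n" using grid_K[OF k] by blast
    have "?d \<le> cmod (z - w)" using infdist_le[OF w(1), of z] by (simp add: dist_norm)
    also have "\<dots> = cmod ((z - zeta n k) + ((zeta n k - cis (real k * gl n)) + (cis (real k * gl n) - w)))"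
      by simp
    also have "\<dots> \<le> cmod (z - zeta n k) + (cmod (zeta n k - cis (real k * gl n)) + cmod (cis (real k * gl n) - w))"
      by (rule order_trans[OF norm_triangle_ineq add_left_mono[OF norm_triangle_ineq]])
    finally have "?e \<le> cmod (zeta n k - z)"
      using zeta_dist[of n k] w(2) by (simp add: norm_minus_commute)
    then show "cmod (complex_of_real (2*M*gl n) * ((zeta n k + z) / (zeta n k - z))) \<le> 2*M*gl n*3/?e"
      by (intro term_small[OF z norm_zeta gl_pos l1 e _ M])
  qed
  also have "\<dots> = 6 * M * Lg (NK K) n / ?e" by (simp add: Lg_def field_simps)
  finally show ?thesis .
qed

end

lemma NK_props:
  assumes Kc: "compact K" and Kn: "arc_null 1 K"
  shows "compact (NK K)" "NK K \<subseteq> {0..2*pi}" "NK K \<in> null_sets lborel"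
proof -
  have eq: "NK K = {0..2*pi} \<inter> cis -` K" by (auto simp: NK_def)
  have cl: "closed (NK K)" unfolding eq
    by (rule continuous_closed_preimage) (use Kc compact_imp_closed in \<open>auto intro!: continuous_intros\<close>)
  show "NK K \<subseteq> {0..2*pi}" by (auto simp: NK_def)
  then have "bounded (NK K)" by (rule bounded_subset[OF bounded_closed_interval])
  then show c: "compact (NK K)" using cl by (simp add: compact_eq_bounded_closed)
  have "NK K \<in> null_sets lebesgue" using Kn by (simp add: arc_null_def NK_def)
  moreover have "NK K \<in> sets borel" using cl by (simp add: borel_closed)
  ultimately show "NK K \<in> null_sets lborel" using null_sets_completion_iff[of "NK K" lborel] by simp
qed

lemma ineq_final:
  fixes j L e d :: real
  assumes j: "0 \<le> j" and L: "0 \<le> L" "L \<le> 1 / (j+1)^2" and d: "0 < d" and e: "d / 2 \<le> e"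
  shows "6 * j * L / e \<le> 12 / (d * (j+1))"
proof -
  have "6 * j * L / e \<le> 6 * j * L / (d/2)"
    using j L d e by (intro divide_left_mono) auto
  also have "\<dots> = 12 * (j * L) / d" by (simp add: field_simps)
  also have "\<dots> \<le> 12 * (j * (1 / (j+1)^2)) / d"
    using j L d by (intro divide_right_mono mult_left_mono) auto
  also have "\<dots> \<le> 12 * (1 / (j+1)) / d"
  proof -
    have a: "j / (j+1) \<le> 1" using j by simp
    have "j * (1 / (j+1)^2) = (j/(j+1)) * (1/(j+1))" by (simp add: power2_eq_square)
    also have "\<dots> \<le> 1 * (1/(j+1))" by (rule mult_right_mono[OF a]) (use j in simp)
    finally have "j * (1 / (j+1)^2) \<le> 1 / (j+1)" by simp
    then show ?thesis using d by (intro divide_right_mono mult_left_mono) auto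
  qed
  also have "\<dots> = 12 / (d * (j+1))" by (simp add: field_simps)
  finally show ?thesis .
qed

lemma peak:
  assumes Kc: "compact K" and K1: "K \<subseteq> circ 1" and Kn: "arc_null 1 K"
  shows "\<exists>g R. (\<forall>j. 1 < R j \<and> g j holomorphic_on ball 0 (R j) \<and> g j \<in> borel_measurable borel
            \<and> (\<forall>z. cmod z \<le> 1 \<longrightarrow> cmod (g j z) \<le> 1))
          \<and> (\<forall>z\<in>K. (\<lambda>j. g j z) \<longlonglongrightarrow> 0)
          \<and> (\<forall>z. cmod z \<le> 1 \<and> z \<notin> K \<longrightarrow> (\<lambda>j. g j z) \<longlonglongrightarrow> 1)"
proof (cases "K = {}")
  case True
  show ?thesis
    by (rule exI[of _ "\<lambda>j z. 1"], rule exI[of _ "\<lambda>j. 2"]) (auto simp: True)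
next
  case Kne: False
  note NP = NK_props[OF Kc Kn]
  have Llim: "Lg (NK K) \<longlonglongrightarrow> 0" by (rule grid_lim[OF NP])
  have ex: "\<exists>n. gl n < 1 / (real j + 1) \<and> Lg (NK K) n < 1 / (real j + 1)^2" for j
  proof -
    have "eventually (\<lambda>n. gl n < 1 / (real j + 1)) sequentially"
      by (rule order_tendstoD(2)[OF gl_lim]) simp
    moreover have "eventually (\<lambda>n. Lg (NK K) n < 1 / (real j + 1)^2) sequentially"
      by (rule order_tendstoD(2)[OF Llim]) simp
    ultimately have "eventually (\<lambda>n. gl n < 1 / (real j + 1) \<and> Lg (NK K) n < 1 / (real j + 1)^2) sequentially"
      by (rule eventually_conj)
    then show ?thesis unfolding eventually_sequentially by (metis order_refl)
  qed
  then obtain nn where nn: "\<And>j. gl (nn j) < 1 / (real j + 1)" "\<And>j. Lg (NK K) (nn j) < 1 / (real j + 1)^2"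
    by metis
  define g where "g j = GG (NK K) (nn j) (real j)" for j
  define R where "R j = 1 + gl (nn j)" for j
  have A: "1 < R j \<and> g j holomorphic_on ball 0 (R j) \<and> g j \<in> borel_measurable borel
            \<and> (\<forall>z. cmod z \<le> 1 \<longrightarrow> cmod (g j z) \<le> 1)" for j
    unfolding g_def R_def using gl_pos GG_holo GG_meas GG_le1 by auto
  have B: "(\<lambda>j. g j z) \<longlonglongrightarrow> 0" if z: "z \<in> K" for z
  proof (rule Lim_null_comparison)
    show "\<forall>\<^sub>F j in sequentially. cmod (g j z) \<le> inverse (real (Suc j))"
      using GG_onK[OF Kc K1 z, of "real _" "nn _"] by (auto simp: g_def divide_inverse add.commute)
    show "(\<lambda>j. inverse (real (Suc j))) \<longlonglongrightarrow> 0" by (rule LIMSEQ_inverse_real_of_nat)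
  qed
  have C: "(\<lambda>j. g j z) \<longlonglongrightarrow> 1" if z: "cmod z \<le> 1" "z \<notin> K" for z
  proof -
    define d where "d = infdist z K"
    have d: "0 < d" unfolding d_def
      using in_closed_iff_infdist_zero[OF compact_imp_closed[OF Kc] Kne, of z] infdist_nonneg[of z K] z
      by auto
    obtain J :: nat where J: "4 / d \<le> real J" using real_arch_simple by blast
    have ev: "cmod (g j z - 1) \<le> 12 / d * inverse (real (Suc j))" if j: "J \<le> j" for j
    proof -
      have "4 / d \<le> real j + 1" using J j by linarith
      then have "1 / (real j + 1) \<le> d / 4" using d by (simp add: field_simps)
      then have gl4: "gl (nn j) < d / 4" using nn(1)[of j] by linarith
      have gl1: "gl (nn j) \<le> 1"
        using nn(1)[of j] by (smt (verit) divide_le_eq_1 of_nat_0_le_iff)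
      have "cmod (1 - g j z) \<le> 6 * real j * Lg (NK K) (nn j) / (d - 2 * gl (nn j))"
        unfolding g_def d_def
        by (rule GG_offK[OF Kc K1 z(1) Kne gl1]) (use gl4 d in \<open>auto simp: d_def\<close>)
      also have "\<dots> \<le> 12 / (d * (real j + 1))"
        by (rule ineq_final) (use nn(2)[of j] gl4 d gl_pos[of "nn j"] in \<open>auto simp: Lg_def intro: less_imp_le\<close>)
      finally show ?thesis by (simp add: norm_minus_commute field_simps)
    qed
    have "(\<lambda>j. g j z - 1) \<longlonglongrightarrow> 0"
    proof (rule Lim_null_comparison)
      show "\<forall>\<^sub>F j in sequentially. cmod (g j z - 1) \<le> 12 / d * inverse (real (Suc j))"
        using ev by (auto simp: eventually_sequentially)
      show "(\<lambda>j. 12 / d * inverse (real (Suc j))) \<longlonglongrightarrow> 0"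
        using tendsto_mult_right_zero[OF LIMSEQ_inverse_real_of_nat, of "12/d"] .
    qed
    then show ?thesis by (simp add: LIM_zero_iff)
  qed
  show ?thesis using A B C by blast
qed

context
  fixes S :: "complex set" and Ms :: "complex measure list"
  assumes cm: "cmeasure_on S Ms"
begin

lemma ci_cong:
  assumes f: "f \<in> borel_measurable borel" and g: "g \<in> borel_measurable borel"
    and eq: "\<And>z. z \<in> S \<Longrightarrow> f z = g z"
  shows "ci Ms f = ci Ms g"
proof -
  have "(\<integral>z. f z \<partial>(Ms!i)) = (\<integral>z. g z \<partial>(Ms!i))" if i: "i < 4" for i
    by (rule integral_cong_AE[OF cm_meas[OF cm i f] cm_meas[OF cm i g]])
       (use cm_AE[OF cm i] eq in \<open>auto elim!: AE_mp\<close>)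
  then show ?thesis unfolding ci_def by simp
qed

lemma ci_cmult: "ci Ms (\<lambda>z. c * f z) = c * ci Ms f"
  unfolding ci_def by (simp add: algebra_simps)

lemma ci_indicator:
  assumes K: "K \<in> sets borel"
  shows "ci Ms (\<lambda>z. indicator K z) = cval Ms K"
proof -
  have I: "(\<integral>z. (indicator K z :: complex) \<partial>(Ms!i)) = complex_of_real (measure (Ms!i) K)" if i: "i < 4" for i
  proof -
    interpret finite_measure "Ms!i" using cm_fin[OF cm i] .
    have "(\<lambda>z. (indicator K z :: complex)) = (\<lambda>z. complex_of_real (indicator K z))"
      by (auto simp: indicator_def)
    then have "(\<integral>z. (indicator K z :: complex) \<partial>(Ms!i)) = complex_of_real (\<integral>z. indicator K z \<partial>(Ms!i))"
      by simp
    also have "(\<integral>z. indicator K z \<partial>(Ms!i)) = measure (Ms!i) K"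
      using cm_space[OF cm i] by (simp add: Bochner_Integration.integral_indicator)
    finally show ?thesis .
  qed
  show ?thesis unfolding ci_def cval_def using I[of 0] I[of 1] I[of 2] I[of 3] by simp
qed

lemma cval_zero_gen:
  assumes K'c: "compact K'" and K'1: "K' \<subseteq> circ 1" and K'n: "arc_null 1 K'"
    and phi: "\<phi> \<in> borel_measurable borel" and phib: "\<And>z. z \<in> S \<Longrightarrow> cmod (\<phi> z) \<le> 1"
    and mom: "\<And>n. ci Ms (\<lambda>z. \<phi> z ^ n) = 0"
    and KB: "K \<in> sets borel" and iff: "\<And>z. z \<in> S \<Longrightarrow> (\<phi> z \<in> K' \<longleftrightarrow> z \<in> K)"
  shows "cval Ms K = 0"
proof -
  obtain g R where A: "\<And>j. 1 < R j \<and> g j holomorphic_on ball 0 (R j) \<and> g j \<in> borel_measurable borel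
            \<and> (\<forall>z. cmod z \<le> 1 \<longrightarrow> cmod (g j z) \<le> 1)"
    and B: "\<And>z. z \<in> K' \<Longrightarrow> (\<lambda>j. g j z) \<longlonglongrightarrow> 0"
    and C: "\<And>z. cmod z \<le> 1 \<Longrightarrow> z \<notin> K' \<Longrightarrow> (\<lambda>j. g j z) \<longlonglongrightarrow> 1"
    using peak[OF K'c K'1 K'n] by blast
  have gm: "(\<lambda>z. g j (\<phi> z)) \<in> borel_measurable borel" for j
    using measurable_compose[OF phi conjunct1[OF conjunct2[OF conjunct2[OF A]]]] by (simp add: comp_def)
  have one: "ci Ms (\<lambda>z. 1) = 0" using mom[of 0] by simp
  have gz: "ci Ms (\<lambda>z. g j (\<phi> z)) = 0" for j
    using ci_holo[OF cm _ _ phi phib mom gm] A by blast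
  have diff: "ci Ms (\<lambda>z. 1 - g j (\<phi> z)) = 0" for j
  proof -
    have "ci Ms (\<lambda>z. 1 - g j (\<phi> z)) = ci Ms (\<lambda>z. 1) - ci Ms (\<lambda>z. g j (\<phi> z))"
      by (rule ci_diff[OF cm, where B=1 and ?B2.0=1]) (use gm A phib in auto)
    then show ?thesis using one gz by simp
  qed
  have conv: "(\<lambda>j. ci Ms (\<lambda>z. 1 - g j (\<phi> z))) \<longlonglongrightarrow> ci Ms (\<lambda>z. indicator K z)"
  proof (rule ci_dct[OF cm, where B=2])
    show "(\<lambda>z. indicator K z) \<in> borel_measurable borel" using KB by measurable
    show "(\<lambda>z. 1 - g j (\<phi> z)) \<in> borel_measurable borel" for j using gm[of j] by measurable
    show "(\<lambda>j. 1 - g j (\<phi> z)) \<longlonglongrightarrow> indicator K z" if z: "z \<in> S" for z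
    proof (cases "z \<in> K")
      case True
      then have "\<phi> z \<in> K'" using iff[OF z] by simp
      then have "(\<lambda>j. 1 - g j (\<phi> z)) \<longlonglongrightarrow> 1 - 0" by (intro tendsto_intros B)
      then show ?thesis using True by simp
    next
      case False
      then have "\<phi> z \<notin> K'" using iff[OF z] by simp
      then have "(\<lambda>j. 1 - g j (\<phi> z)) \<longlonglongrightarrow> 1 - 1" using phib[OF z] by (intro tendsto_intros C)
      then show ?thesis using False by simp
    qed
    show "cmod (1 - g j (\<phi> z)) \<le> 2" if z: "z \<in> S" for j z
    proof -
      have "cmod (g j (\<phi> z)) \<le> 1" using A phib[OF z] by blast
      then show ?thesis using norm_triangle_ineq4[of 1 "g j (\<phi> z)"] by simp
    qed
  qed
  then have "ci Ms (\<lambda>z. indicator K z) = 0" unfolding diff by (simp add: LIMSEQ_const_iff)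
  then show ?thesis using ci_indicator[OF KB] by simp
qed

end

lemma circ_closed: "closed (circ r)"
proof -
  have "circ r = sphere 0 r" by (auto simp: circ_def)
  then show ?thesis by simp
qed

lemma circ_borel: "circ r \<in> sets borel"
  using circ_closed by (simp add: borel_closed)

lemma powi_meas: "(\<lambda>z::complex. z powi n) \<in> borel_measurable borel"
  unfolding power_int_def by measurable

lemma ci_add:
  assumes cm: "cmeasure_on S Ms"
    and f: "f \<in> borel_measurable borel" and b: "\<And>z. z \<in> S \<Longrightarrow> norm (f z) \<le> B"
    and g: "g \<in> borel_measurable borel" and b2: "\<And>z. z \<in> S \<Longrightarrow> norm (g z) \<le> B2"
  shows "ci Ms (\<lambda>z. f z + g z) = ci Ms f + ci Ms g"
proof -
  have "ci Ms (\<lambda>z. f z - (-1) * g z) = ci Ms f - ci Ms (\<lambda>z. (-1) * g z)"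
    by (rule ci_diff[OF cm f b, where ?B2.0=B2]) (use g b2 in auto)
  moreover have "ci Ms (\<lambda>z. (-1) * g z) = - ci Ms g" unfolding ci_cmult[OF cm] by simp
  ultimately show ?thesis by simp
qed

context
  fixes r0 :: real and Ms :: "complex measure list"
  assumes r0: "0 < r0" "r0 < 1"
    and cm: "cmeasure_on (circ 1 \<union> circ r0) Ms"
    and hyp: "\<forall>j::int. cintegral Ms (circ r0) (\<lambda>z. z powi (-j))
                 = - cintegral Ms (circ 1) (\<lambda>z. z powi (-j))"
begin

lemma cint_ci: "cintegral Ms B f = ci Ms (\<lambda>z. indicator B z *\<^sub>R f z)"
  unfolding cintegral_def ci_def set_lebesgue_integral_def ..

lemma circ_disj: "circ 1 \<inter> circ r0 = {}"
  using r0 by (auto simp: circ_def)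

lemma moments: "ci Ms (\<lambda>z. z powi n) = 0"
proof -
  let ?S = "circ 1 \<union> circ r0"
  let ?B = "1 + r0 powi n"
  have bd: "cmod (z powi n) \<le> ?B" if z: "z \<in> ?S" for z
  proof -
    have p: "0 < r0 powi n" using r0 by simp
    have "cmod z = 1 \<or> cmod z = r0" using z by (auto simp: circ_def)
    then show ?thesis using p unfolding norm_power_int by auto
  qed
  have bd1: "norm (indicator B z *\<^sub>R z powi n) \<le> ?B" if z: "z \<in> ?S" for B z
  proof -
    have "0 < r0 powi n" using r0 by simp
    then show ?thesis using bd[OF z] by (auto simp: indicator_def)
  qed
  have m1: "(\<lambda>z::complex. indicator B z *\<^sub>R z powi n) \<in> borel_measurable borel" if "B \<in> sets borel" for B
    by (rule borel_measurable_scaleR, rule borel_measurable_indicator, rule that, rule powi_meas)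
  have "ci Ms (\<lambda>z. z powi n) = ci Ms (\<lambda>z. indicator (circ 1) z *\<^sub>R z powi n + indicator (circ r0) z *\<^sub>R z powi n)"
    by (rule ci_cong[OF cm powi_meas]) (use circ_borel m1 circ_disj in \<open>auto simp: indicator_def\<close>)
  also have "\<dots> = ci Ms (\<lambda>z. indicator (circ 1) z *\<^sub>R z powi n) + ci Ms (\<lambda>z. indicator (circ r0) z *\<^sub>R z powi n)"
    by (rule ci_add[OF cm m1 bd1 m1 bd1]) (auto simp: circ_borel)
  also have "\<dots> = cintegral Ms (circ 1) (\<lambda>z. z powi n) + cintegral Ms (circ r0) (\<lambda>z. z powi n)"
    unfolding cint_ci ..
  also have "\<dots> = 0" using hyp[rule_format, of "-n"] by simp
  finally show ?thesis .
qed

lemma cval_K1: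
  assumes Kc: "compact K" and K1: "K \<subseteq> circ 1" and Kn: "arc_null 1 K"
  shows "cval Ms K = 0"
proof (rule cval_zero_gen[OF cm Kc K1 Kn, where \<phi> = "\<lambda>z. z"])
  show "(\<lambda>z. z) \<in> borel_measurable borel" by simp
  show "cmod z \<le> 1" if "z \<in> circ 1 \<union> circ r0" for z using that r0 by (auto simp: circ_def)
  show "ci Ms (\<lambda>z. z ^ n) = 0" for n using moments[of "int n"] by simp
  show "K \<in> sets borel" using Kc by (simp add: borel_closed compact_imp_closed)
qed simp

lemma cval_K0:
  assumes Kc: "compact K" and K0: "K \<subseteq> circ r0" and Kn: "arc_null r0 K"
  shows "cval Ms K = 0"
proof -
  define \<phi> where "\<phi> z = complex_of_real r0 / z" for z
  define K' where "K' = \<phi> ` K"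
  have nz: "z \<noteq> 0" if "z \<in> K" for z using that K0 r0 by (auto simp: circ_def)
  have K'c: "compact K'" unfolding K'_def \<phi>_def
    by (rule compact_continuous_image[OF _ Kc]) (use nz in \<open>auto intro!: continuous_intros\<close>)
  have K'1: "K' \<subseteq> circ 1"
    using K0 r0 unfolding K'_def \<phi>_def by (auto simp: circ_def norm_divide)
  have K'n: "arc_null 1 K'"
  proof -
    define N0 where "N0 = {t \<in> {0..2*pi}. complex_of_real r0 * cis t \<in> K}"
    have negN0: "negligible N0" using Kn by (simp add: arc_null_def N0_def negligible_iff_null_sets)
    have neg: "negligible ((\<lambda>t. 2*pi - t) ` N0)" (is "negligible ?I")
    proof (rule negligible_locally_Lipschitz_image)
      show "DIM(real) \<le> DIM(real)" by simp
      show "negligible N0" by (rule negN0)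
      show "\<exists>T B. open T \<and> x \<in> T \<and> (\<forall>y\<in>N0 \<inter> T. norm ((2*pi - y) - (2*pi - x)) \<le> B * norm (y - x))" for x
        by (rule exI[of _ UNIV], rule exI[of _ 1]) auto
    qed
    have "{t \<in> {0..2*pi}. complex_of_real 1 * cis t \<in> K'} \<subseteq> (\<lambda>t. 2*pi - t) ` N0"
    proof
      fix t assume t: "t \<in> {t \<in> {0..2*pi}. complex_of_real 1 * cis t \<in> K'}"
      then obtain w where w: "w \<in> K" "cis t = complex_of_real r0 / w" unfolding K'_def \<phi>_def by auto
      have "w = complex_of_real r0 / cis t" using w nz[OF w(1)] r0 by (auto simp: field_simps)
      also have "\<dots> = complex_of_real r0 * cis (2*pi - t)"
      proof -
        have "cis (2*pi + - t) = cis (2*pi) * cis (-t)" by (rule cis_mult[symmetric])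
        then have "cis (2*pi - t) = inverse (cis t)" by simp
        then show ?thesis by (simp add: divide_inverse)
      qed
      finally have "2*pi - t \<in> N0" using w t by (auto simp: N0_def)
      then show "t \<in> (\<lambda>t. 2*pi - t) ` N0" by (rule rev_image_eqI) simp
    qed
    then have "negligible {t \<in> {0..2*pi}. complex_of_real 1 * cis t \<in> K'}"
      by (rule negligible_subset[OF neg])
    then show ?thesis by (simp add: arc_null_def negligible_iff_null_sets)
  qed
  show ?thesis
  proof (rule cval_zero_gen[OF cm K'c K'1 K'n, where \<phi> = \<phi>])
    show "\<phi> \<in> borel_measurable borel" unfolding \<phi>_def[abs_def] by measurable
    show "cmod (\<phi> z) \<le> 1" if "z \<in> circ 1 \<union> circ r0" for z
      using that r0 by (auto simp: circ_def \<phi>_def norm_divide)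
    show "ci Ms (\<lambda>z. \<phi> z ^ n) = 0" for n
    proof -
      have "ci Ms (\<lambda>z. \<phi> z ^ n) = ci Ms (\<lambda>z. complex_of_real r0 ^ n * z powi (- int n))"
        by (rule arg_cong[where f="ci Ms"], rule ext) (simp add: \<phi>_def power_int_minus divide_inverse power_mult_distrib power_inverse)
      also have "\<dots> = complex_of_real r0 ^ n * ci Ms (\<lambda>z. z powi (- int n))" by (rule ci_cmult[OF cm])
      also have "\<dots> = 0" using moments by simp
      finally show ?thesis .
    qed
    show "K \<in> sets borel" using Kc by (simp add: borel_closed compact_imp_closed)
    show "(\<phi> z \<in> K') = (z \<in> K)" if z: "z \<in> circ 1 \<union> circ r0" for z
    proof
      assume "\<phi> z \<in> K'"
      then obtain w where w: "w \<in> K" "\<phi> z = \<phi> w" unfolding K'_def by auto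
      have "z \<noteq> 0" using z r0 by (auto simp: circ_def)
      then have "z = w" using w nz[OF w(1)] r0 by (auto simp: \<phi>_def field_simps)
      then show "z \<in> K" using w by simp
    qed (auto simp: K'_def)
  qed
qed

end

context
  fixes S :: "complex set" and Ms :: "complex measure list"
  assumes cm: "cmeasure_on S Ms"
begin

lemma cval_add:
  assumes A: "A \<in> sets borel" and B: "B \<in> sets borel" and d: "A \<inter> B = {}"
  shows "cval Ms (A \<union> B) = cval Ms A + cval Ms B"
proof -
  have m: "measure (Ms!i) (A \<union> B) = measure (Ms!i) A + measure (Ms!i) B" if i: "i < 4" for i
  proof -
    interpret finite_measure "Ms!i" using cm_fin[OF cm i] .
    show ?thesis using A B d cm_sets[OF cm i] by (intro finite_measure_Union) auto
  qed
  show ?thesis unfolding cval_def using m[of 0] m[of 1] m[of 2] m[of 3] by (simp add: algebra_simps)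
qed

lemma cval_bound: "cmod (cval Ms A) \<le> (\<Sum>i<4. measure (Ms!i) A)"
proof -
  have "cmod (cval Ms A) \<le> cmod (complex_of_real (measure (Ms!0) A - measure (Ms!1) A))
     + cmod (\<i> * complex_of_real (measure (Ms!2) A - measure (Ms!3) A))"
    unfolding cval_def by (rule norm_triangle_ineq)
  also have "\<dots> = \<bar>measure (Ms!0) A - measure (Ms!1) A\<bar> + \<bar>measure (Ms!2) A - measure (Ms!3) A\<bar>"
    by (simp add: norm_mult del: of_real_diff)
  also have "\<dots> \<le> (\<Sum>i<4. measure (Ms!i) A)"
    by (simp add: numeral_eq_Suc) (smt (verit) measure_nonneg)
  finally show ?thesis .
qed

lemma inner_approx:
  assumes P: "P \<in> sets borel" and i: "i < 4" and e: "0 < e"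
  shows "\<exists>K. compact K \<and> K \<subseteq> P \<and> measure (Ms!i) P < measure (Ms!i) K + e"
proof (cases "measure (Ms!i) P < e")
  case True
  then show ?thesis by (intro exI[of _ "{}"]) auto
next
  case False
  interpret finite_measure "Ms!i" using cm_fin[OF cm i] .
  have sb: "sets (Ms!i) = sets borel" using cm_sets[OF cm i] .
  have "emeasure (Ms!i) P = (SUP K \<in> {K. K \<subseteq> P \<and> compact K}. emeasure (Ms!i) K)"
    by (rule inner_regular[OF sb _ P]) simp
  moreover have "ennreal (measure (Ms!i) P - e) < emeasure (Ms!i) P"
    using False e by (simp add: emeasure_eq_measure ennreal_less_iff)
  ultimately obtain K where K: "K \<subseteq> P" "compact K" "ennreal (measure (Ms!i) P - e) < emeasure (Ms!i) K"
    by (auto simp: less_SUP_iff)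
  have "measure (Ms!i) P - e < measure (Ms!i) K"
    using K(3) False by (simp add: emeasure_eq_measure ennreal_less_iff)
  then show ?thesis using K by (intro exI[of _ K]) auto
qed

end

context
  fixes r0 :: real and Ms :: "complex measure list"
  assumes r0: "0 < r0" "r0 < 1"
    and cm: "cmeasure_on (circ 1 \<union> circ r0) Ms"
    and hyp: "\<forall>j::int. cintegral Ms (circ r0) (\<lambda>z. z powi (-j))
                 = - cintegral Ms (circ 1) (\<lambda>z. z powi (-j))"
begin

lemma cval_P:
  assumes P: "P \<in> sets borel" and PS: "P \<subseteq> circ 1 \<union> circ r0"
    and n1: "arc_null 1 P" and n0: "arc_null r0 P"
  shows "cval Ms P = 0"
proof -
  have main: "cmod (cval Ms P) \<le> 4 * e" if e: "0 < e" for e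
  proof -
    have "\<forall>i\<in>{..<4}. \<exists>K. compact K \<and> K \<subseteq> P \<and> measure (Ms!i) P < measure (Ms!i) K + e"
      using inner_approx[OF cm P _ e] by auto
    then obtain Kf where Kf: "\<And>i. i < 4 \<Longrightarrow> compact (Kf i) \<and> Kf i \<subseteq> P \<and> measure (Ms!i) P < measure (Ms!i) (Kf i) + e"
      by (metis lessThan_iff)
    define K where "K = (\<Union>i<4. Kf i)"
    have Kc: "compact K" unfolding K_def using Kf by (intro compact_UN) auto
    have KP: "K \<subseteq> P" unfolding K_def using Kf by auto
    have KB: "K \<in> sets borel" using Kc by (simp add: borel_closed compact_imp_closed)
    define K1 where "K1 = K \<inter> circ 1"
    define K0 where "K0 = K \<inter> circ r0"
    have K1c: "compact K1" unfolding K1_def by (rule compact_Int_closed[OF Kc circ_closed])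
    have K0c: "compact K0" unfolding K0_def by (rule compact_Int_closed[OF Kc circ_closed])
    have K1n: "arc_null 1 K1"
      using n1 unfolding arc_null_def K1_def
      by (rule null_sets_completion_subset[rotated]) (use KP in auto)
    have K0n: "arc_null r0 K0"
      using n0 unfolding arc_null_def K0_def
      by (rule null_sets_completion_subset[rotated]) (use KP in auto)
    have "cval Ms K1 = 0" by (rule cval_K1[OF r0 cm hyp K1c _ K1n]) (auto simp: K1_def)
    moreover have "cval Ms K0 = 0" by (rule cval_K0[OF r0 cm hyp K0c _ K0n]) (auto simp: K0_def)
    moreover have "K = K1 \<union> K0" using KP PS unfolding K1_def K0_def by auto
    moreover have "cval Ms (K1 \<union> K0) = cval Ms K1 + cval Ms K0"
      by (rule cval_add[OF cm]) (use KB circ_borel circ_disj[OF r0 cm hyp] in \<open>auto simp: K1_def K0_def\<close>)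
    ultimately have cK: "cval Ms K = 0" by simp
    have "P = K \<union> (P - K)" using KP by auto
    then have "cval Ms P = cval Ms K + cval Ms (P - K)"
      using cval_add[OF cm KB, of "P - K"] P KB by auto
    then have "cval Ms P = cval Ms (P - K)" using cK by simp
    also have "cmod \<dots> \<le> (\<Sum>i<4. measure (Ms!i) (P - K))" by (rule cval_bound[OF cm])
    also have "\<dots> \<le> (\<Sum>i<(4::nat). e)"
    proof (rule sum_mono)
      fix i assume "i \<in> {..<(4::nat)}"
      then have i: "i < 4" by simp
      interpret finite_measure "Ms!i" using cm_fin[OF cm i] .
      have sb: "sets (Ms!i) = sets borel" using cm_sets[OF cm i] .
      have "measure (Ms!i) (P - K) \<le> measure (Ms!i) (P - Kf i)"
      proof (rule finite_measure_mono)
        have "Kf i \<in> sets borel" using Kf[OF i] by (simp add: borel_closed compact_imp_closed)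
        then show "P - Kf i \<in> sets (Ms!i)" using P sb by auto
        show "P - K \<subseteq> P - Kf i" using i unfolding K_def by auto
      qed
      also have "\<dots> = measure (Ms!i) P - measure (Ms!i) (Kf i)"
        using Kf[OF i] P sb by (intro finite_measure_Diff) (auto simp: borel_closed compact_imp_closed)
      also have "\<dots> \<le> e" using Kf[OF i] by simp
      finally show "measure (Ms!i) (P - K) \<le> e" .
    qed
    also have "\<dots> = 4 * e" by simp
    finally show ?thesis .
  qed
  have "cmod (cval Ms P) \<le> 0"
  proof (rule field_le_epsilon)
    fix e :: real assume "0 < e"
    then have "cmod (cval Ms P) \<le> 4 * (e / 4)" by (intro main) simp
    then show "cmod (cval Ms P) \<le> 0 + e" by simp
  qed
  then show ?thesis by simp
qed

end

theorem theorem1p2: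
  fixes r0 :: real and Ms :: "complex measure list"
  assumes "0 < r0" and "r0 < 1"
    and "cmeasure_on (circ 1 \<union> circ r0) Ms"
    and "\<forall>j::int. cintegral Ms (circ r0) (\<lambda>z. z powi (-j))
                 = - cintegral Ms (circ 1) (\<lambda>z. z powi (-j))"
  shows "\<forall>E. E \<subseteq> circ 1 \<union> circ r0 \<and> arc_null 1 E \<and> arc_null r0 E \<longrightarrow> cnull Ms E"
proof (intro allI impI, elim conjE)
  note r0 = assms(1,2) and cm = assms(3) and hyp = assms(4)
  fix E assume ES: "E \<subseteq> circ 1 \<union> circ r0" and n1: "arc_null 1 E" and n0: "arc_null r0 E"
  obtain B1' where B1': "B1' \<in> null_sets lborel" "{t \<in> {0..2*pi}. complex_of_real 1 * cis t \<in> E} \<subseteq> B1'"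
    using n1 unfolding arc_null_def null_sets_completion_iff2 by blast
  obtain B0' where B0': "B0' \<in> null_sets lborel" "{t \<in> {0..2*pi}. complex_of_real r0 * cis t \<in> E} \<subseteq> B0'"
    using n0 unfolding arc_null_def null_sets_completion_iff2 by blast
  define B where "B = (circ 1 \<inter> Arg2pi -` B1') \<union> (circ r0 \<inter> Arg2pi -` B0')"
  have pre: "Arg2pi -` A \<in> sets borel" if "A \<in> sets borel" for A
    using measurable_sets[OF Arg2pi_measurable that] by simp
  have BB: "B \<in> sets borel"
    unfolding B_def using B1'(1) B0'(1) circ_borel pre by (auto simp: null_sets_def)
  have EB: "E \<subseteq> B"
  proof
    fix z assume z: "z \<in> E"
    then have zS: "cmod z = 1 \<or> cmod z = r0" using ES by (auto simp: circ_def)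
    then have "z \<noteq> 0" using r0 by auto
    have ez: "z = complex_of_real (cmod z) * cis (Arg2pi z)" by (rule eq_rcis_Arg2pi[OF \<open>z \<noteq> 0\<close>])
    have a: "Arg2pi z \<in> {0..2*pi}" using Arg2pi_ge_0[of z] Arg2pi_lt_2pi[of z] by auto
    from zS show "z \<in> B"
    proof
      assume "cmod z = 1"
      then have "Arg2pi z \<in> B1'" using B1'(2) a z ez by auto
      then show ?thesis using \<open>cmod z = 1\<close> by (auto simp: B_def circ_def)
    next
      assume "cmod z = r0"
      then have "Arg2pi z \<in> B0'" using B0'(2) a z ez by auto
      then show ?thesis using \<open>cmod z = r0\<close> by (auto simp: B_def circ_def)
    qed
  qed
  have BS: "B \<subseteq> circ 1 \<union> circ r0" by (auto simp: B_def)
  have Bn1: "arc_null 1 B"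
  proof -
    have "{t \<in> {0..2*pi}. complex_of_real 1 * cis t \<in> B} \<subseteq> B1' \<union> {2*pi}"
    proof
      fix t assume t: "t \<in> {t \<in> {0..2*pi}. complex_of_real 1 * cis t \<in> B}"
      then have "cis t \<in> B" by simp
      moreover have "cis t \<notin> circ r0" using r0 by (auto simp: circ_def)
      ultimately have "Arg2pi (cis t) \<in> B1'" by (auto simp: B_def)
      moreover have "t < 2*pi \<Longrightarrow> Arg2pi (cis t) = t"
        using Arg2pi_rcis[of 1 t] t by simp
      ultimately show "t \<in> B1' \<union> {2*pi}" using t
        by (cases "t < 2*pi") auto
    qed
    moreover have "B1' \<union> {2*pi} \<in> null_sets lborel"
      by (rule null_sets.Un[OF B1'(1) finite_imp_null_set_lborel]) simp
    ultimately show ?thesis unfolding arc_null_def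
      by (meson null_sets_completionI null_sets_completion_subset)
  qed
  have Bn0: "arc_null r0 B"
  proof -
    have "{t \<in> {0..2*pi}. complex_of_real r0 * cis t \<in> B} \<subseteq> B0' \<union> {2*pi}"
    proof
      fix t assume t: "t \<in> {t \<in> {0..2*pi}. complex_of_real r0 * cis t \<in> B}"
      then have "complex_of_real r0 * cis t \<in> B" by simp
      moreover have "complex_of_real r0 * cis t \<notin> circ 1" using r0 by (auto simp: circ_def norm_mult)
      ultimately have "Arg2pi (complex_of_real r0 * cis t) \<in> B0'" by (auto simp: B_def)
      moreover have "t < 2*pi \<Longrightarrow> Arg2pi (complex_of_real r0 * cis t) = t"
        using Arg2pi_rcis[of r0 t] t r0 by simp
      ultimately show "t \<in> B0' \<union> {2*pi}" using t
        by (cases "t < 2*pi") auto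
    qed
    moreover have "B0' \<union> {2*pi} \<in> null_sets lborel"
      by (rule null_sets.Un[OF B0'(1) finite_imp_null_set_lborel]) simp
    ultimately show ?thesis unfolding arc_null_def
      by (meson null_sets_completionI null_sets_completion_subset)
  qed
  have sub0: "cval Ms P = 0" if P: "P \<in> sets borel" "P \<subseteq> B" for P
  proof (rule cval_P[OF r0 cm hyp P(1)])
    show "P \<subseteq> circ 1 \<union> circ r0" using P BS by auto
    show "arc_null 1 P" using Bn1 unfolding arc_null_def
      by (rule null_sets_completion_subset[rotated]) (use P(2) in auto)
    show "arc_null r0 P" using Bn0 unfolding arc_null_def
      by (rule null_sets_completion_subset[rotated]) (use P(2) in auto)
  qed
  have X: "{(\<Sum>P\<in>\<P>. cmod (cval Ms P)) | \<P>.
       finite \<P> \<and> disjoint \<P> \<and> \<Union>\<P> = B \<and> \<P> \<subseteq> sets borel} = {0}"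
  proof
    show "{(\<Sum>P\<in>\<P>. cmod (cval Ms P)) | \<P>.
       finite \<P> \<and> disjoint \<P> \<and> \<Union>\<P> = B \<and> \<P> \<subseteq> sets borel} \<subseteq> {0}"
    proof
      fix x assume "x \<in> {(\<Sum>P\<in>\<P>. cmod (cval Ms P)) | \<P>.
       finite \<P> \<and> disjoint \<P> \<and> \<Union>\<P> = B \<and> \<P> \<subseteq> sets borel}"
      then obtain \<P> where x: "x = (\<Sum>P\<in>\<P>. cmod (cval Ms P))" and p: "\<Union>\<P> = B" "\<P> \<subseteq> sets borel"
        by (elim CollectE exE conjE) simp
      have "cval Ms P = 0" if "P \<in> \<P>" for P
        using sub0[of P] p that by auto
      then show "x \<in> {0}" using x by simp
    qed
    show "{0} \<subseteq> {(\<Sum>P\<in>\<P>. cmod (cval Ms P)) | \<P>.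
       finite \<P> \<and> disjoint \<P> \<and> \<Union>\<P> = B \<and> \<P> \<subseteq> sets borel}"
    proof -
      have "(\<Sum>P\<in>{B}. cmod (cval Ms P)) = 0" using sub0[OF BB] by simp
      moreover have "finite {B} \<and> disjoint {B} \<and> \<Union>{B} = B \<and> {B} \<subseteq> sets borel"
        using BB by (auto simp: disjoint_def)
      ultimately have "0 \<in> {(\<Sum>P\<in>\<P>. cmod (cval Ms P)) | \<P>.
       finite \<P> \<and> disjoint \<P> \<and> \<Union>\<P> = B \<and> \<P> \<subseteq> sets borel}"
        by (intro CollectI exI[of _ "{B}"]) simp
      then show ?thesis by simp
    qed
  qed
  have "ctotal_variation Ms B = 0" unfolding ctotal_variation_def X by simp
  then show "cnull Ms E" unfolding cnull_def using BB EB by blast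
qed


end
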